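(* Let $n\geq 1$ and let $\boldsymbol\pi$ be a random permutation of $[n]=\{1,\dots,n\}$. If $\boldsymbol\pi$ is finitely exchangeable, then its cycle structure $\mathrm{z}(\boldsymbol\pi)$ is a finitely exchangeable random partition of $[n]$.
   Context: $\mathcal S_n$ denotes the set of permutations of $[n]$. Every $\pi\in\mathcal S_n$ is written uniquely as a product of disjoint cycles, each cycle starting with its least element and the cycles ordered by their first elements. The cycle structure of $\pi$ is the allocation vector $\mathrm{z}(\pi)=(z_1(\pi),\dots,z_n(\pi))$, where $z_i(\pi)=j$ if $i$ lies in the $j$-th cycle in this ordering (so cycle labels are in order of appearance). The cycle type of $\pi$ is $\mathrm{t}(\pi)=(t_1(\pi),\dots,t_n(\pi))$, with $t_i(\pi)$ the number of cycles of length $i$. A random permutation $\boldsymbol\pi\in\mathcal S_n$ is finitely exchangeable if $P(\boldsymbol\pi=\pi)=P(\boldsymbol\pi=\pi')$ whenever $\mathrm{t}(\pi)=\mathrm{t}(\pi')$. A random partition of $[n]$ given as an allocation vector $\mathbf z=(\boldsymbol z_1,\dots,\boldsymbol z_n)$ with labels in order of appearance is finitely exchangeable if $P(\mathbf z=(z_1,\dots,z_n))=P(\mathbf z=\overline{(z_{\sigma(1)},\dots,z_{\sigma(n)})})$ for every $\sigma\in\mathcal S_n$, where $\overline{(\cdot)}$ denotes the relabeling of the blocks into order of appearance. *)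

theory Defs
  imports "HOL-Probability.Probability_Mass_Function" "HOL-Combinatorics.Permutations"
begin

definition cycle_of :: "(nat \<Rightarrow> nat) \<Rightarrow> nat \<Rightarrow> nat set" where
  "cycle_of \<pi> i = {(\<pi> ^^ k) i | k. True}"

definition cyc_min :: "(nat \<Rightarrow> nat) \<Rightarrow> nat \<Rightarrow> nat" where
  "cyc_min \<pi> i = Min (cycle_of \<pi> i)"

text \<open>Cycle structure z(\<pi>) = (z_1,...,z_n) as a list of length n: z_i = j iff i lies in the
  j-th cycle, cycles ordered by their least elements.\<close>
definition cycle_structure :: "nat \<Rightarrow> (nat \<Rightarrow> nat) \<Rightarrow> nat list" where
  "cycle_structure n \<pi> =
     map (\<lambda>i. card {j \<in> {1..n}. cyc_min \<pi> j = j \<and> j \<le> cyc_min \<pi> i}) [1..<n+1]"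

definition cycle_type :: "nat \<Rightarrow> (nat \<Rightarrow> nat) \<Rightarrow> nat list" where
  "cycle_type n \<pi> =
     map (\<lambda>l. card {c \<in> cycle_of \<pi> ` {1..n}. card c = l}) [1..<n+1]"

text \<open>Relabeling of blocks into order of appearance: the label x becomes 1 + the number of
  distinct labels appearing before the first occurrence of x.\<close>
definition relabel :: "nat list \<Rightarrow> nat list" where
  "relabel w = map (\<lambda>x. card (set (takeWhile (\<lambda>y. y \<noteq> x) w)) + 1) w"

text \<open>Allocation vectors of partitions of [n] with labels in order of appearance.\<close>
definition alloc_vector :: "nat \<Rightarrow> nat list \<Rightarrow> bool" where
  "alloc_vector n w \<longleftrightarrow> length w = n \<and> relabel w = w"

definition permute_vec :: "nat \<Rightarrow> (nat \<Rightarrow> nat) \<Rightarrow> nat list \<Rightarrow> nat list" where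
  "permute_vec n \<sigma> w = map (\<lambda>i. w ! (\<sigma> i - 1)) [1..<n+1]"

definition fin_exch_perm :: "nat \<Rightarrow> (nat \<Rightarrow> nat) pmf \<Rightarrow> bool" where
  "fin_exch_perm n P \<longleftrightarrow>
     (\<forall>\<pi> \<pi>'. \<pi> permutes {1..n} \<longrightarrow> \<pi>' permutes {1..n} \<longrightarrow>
        cycle_type n \<pi> = cycle_type n \<pi>' \<longrightarrow> pmf P \<pi> = pmf P \<pi>')"

definition fin_exch_partition :: "nat \<Rightarrow> nat list pmf \<Rightarrow> bool" where
  "fin_exch_partition n Z \<longleftrightarrow>
     (\<forall>w \<sigma>. alloc_vector n w \<longrightarrow> \<sigma> permutes {1..n} \<longrightarrow>
        pmf Z w = pmf Z (relabel (permute_vec n \<sigma> w)))"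

end

theory Submission
  imports Defs
begin

lemma permutes_funpow':
  assumes "p permutes S" shows "(p ^^ n) permutes S"
  using assms by (induct n) (simp add: permutes_def, metis funpow_Suc_right permutes_compose)

lemma cyc_self: "i \<in> cycle_of p i"
  unfolding cycle_of_def by (auto intro: exI[of _ 0])

lemma cyc_trans: "j \<in> cycle_of p i \<Longrightarrow> k \<in> cycle_of p j \<Longrightarrow> k \<in> cycle_of p i"
  proof -
  assume "j \<in> cycle_of p i" "k \<in> cycle_of p j"
  then obtain a b where "j = (p ^^ a) i" "k = (p ^^ b) j" unfolding cycle_of_def by auto
  hence "k = (p ^^ (b + a)) i" by (simp add: funpow_add)
  thus ?thesis unfolding cycle_of_def by blast
qed

lemma cyc_sub: assumes "p permutes {1..n}" "i \<in> {1..n}" shows "cycle_of p i \<subseteq> {1..n}"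
  unfolding cycle_of_def using permutes_in_image[OF permutes_funpow'[OF assms(1)]] assms(2) by auto

lemma cyc_fin: assumes "p permutes {1..n}" "i \<in> {1..n}" shows "finite (cycle_of p i)"
  using cyc_sub[OF assms] finite_subset by blast

lemma cyc_period: fixes p :: "nat \<Rightarrow> nat" assumes "p permutes {1..n}" "i \<in> {1..n}" obtains d where "d > 0" "(p ^^ d) i = i"
proof -
  have "(\<lambda>k. (p ^^ k) i) ` UNIV \<subseteq> {1..n}"
    using permutes_in_image[OF permutes_funpow'[OF assms(1)]] assms(2) by auto
  hence fin: "finite ((\<lambda>k. (p ^^ k) i) ` UNIV)" by (rule finite_subset) simp
  have "\<not> inj_on (\<lambda>k. (p ^^ k) i) UNIV"
  proof
    assume "inj_on (\<lambda>k. (p ^^ k) i) UNIV"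
    hence "finite (UNIV :: nat set)" by (rule finite_imageD[OF fin])
    thus False by simp
  qed
  then obtain a b where ab: "a < b" "(p ^^ a) i = (p ^^ b) i"
    unfolding inj_on_def by (metis nat_neq_iff)
  have "(p ^^ b) i = (p ^^ a) ((p ^^ (b - a)) i)"
    using ab(1) by (metis funpow_add comp_apply le_add_diff_inverse less_imp_le)
  hence "(p ^^ a) ((p ^^ (b - a)) i) = (p ^^ a) i" using ab(2) by simp
  moreover have "inj (p ^^ a)" using inj_fn[OF permutes_inj[OF assms(1)]] .
  ultimately have "(p ^^ (b - a)) i = i" by (simp add: inj_eq)
  moreover have "b - a > 0" using ab(1) by simp
  ultimately show ?thesis using that by blast
qed

lemma funpow_mult_fix: "(p ^^ d) i = i \<Longrightarrow> (p ^^ (d * m)) i = i"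
  by (induct m) (auto simp: funpow_add)

lemma cyc_sym: assumes "p permutes {1..n}" "i \<in> {1..n}" "j \<in> cycle_of p i" shows "i \<in> cycle_of p j"
proof -
  obtain a where a: "j = (p ^^ a) i" using assms(3) unfolding cycle_of_def by auto
  obtain d where d: "d > 0" "(p ^^ d) i = i" using cyc_period[OF assms(1,2)] by blast
  have N1: "(p ^^ (d * (a+1))) i = i" using funpow_mult_fix[OF d(2)] .
  have "1 * (a + 1) \<le> d * (a+1)" using d(1) by (intro mult_le_mono1) simp
  hence N2: "a \<le> d * (a+1)" by simp
  have "(p ^^ (d * (a+1) - a)) j = (p ^^ (d * (a+1) - a + a)) i" by (simp add: a funpow_add)
  also have "\<dots> = i" using N1 N2 by simp
  finally show ?thesis unfolding cycle_of_def by blast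
qed

lemma cyc_eq: assumes "p permutes {1..n}" "i \<in> {1..n}" "j \<in> cycle_of p i" shows "cycle_of p j = cycle_of p i"
  using cyc_trans cyc_sym[OF assms] assms(3) by blast

lemma cmin_in: assumes "p permutes {1..n}" "i \<in> {1..n}" shows "cyc_min p i \<in> cycle_of p i"
  unfolding cyc_min_def using cyc_fin[OF assms] cyc_self by (intro Min_in) auto

lemma cmin_le: assumes "p permutes {1..n}" "i \<in> {1..n}" "j \<in> cycle_of p i" shows "cyc_min p i \<le> j"
  unfolding cyc_min_def using cyc_fin[OF assms(1,2)] assms(3) by simp

lemma cmin_range: assumes "p permutes {1..n}" "i \<in> {1..n}" shows "cyc_min p i \<in> {1..n}"
  using cmin_in[OF assms] cyc_sub[OF assms] by blast

lemma cmin_iff: assumes "p permutes {1..n}" "i \<in> {1..n}" "j \<in> {1..n}"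
  shows "cyc_min p i = cyc_min p j \<longleftrightarrow> j \<in> cycle_of p i"
proof
  assume h: "cyc_min p i = cyc_min p j"
  have "cycle_of p (cyc_min p i) = cycle_of p i" using cyc_eq[OF assms(1,2) cmin_in[OF assms(1,2)]] .
  moreover have "cycle_of p (cyc_min p j) = cycle_of p j" using cyc_eq[OF assms(1,3) cmin_in[OF assms(1,3)]] .
  ultimately show "j \<in> cycle_of p i" using h cyc_self by metis
next
  assume "j \<in> cycle_of p i"
  then show "cyc_min p i = cyc_min p j" unfolding cyc_min_def using cyc_eq[OF assms(1,2)] by metis
qed

lemma cmin_idem: assumes "p permutes {1..n}" "i \<in> {1..n}" shows "cyc_min p (cyc_min p i) = cyc_min p i"
  unfolding cyc_min_def using cyc_eq[OF assms cmin_in[OF assms]] unfolding cyc_min_def by simp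


lemma card_img_le:
  assumes "finite A" "\<And>x y. x \<in> A \<Longrightarrow> y \<in> A \<Longrightarrow> g x = g y \<Longrightarrow> f x = f y"
  shows "card (f ` A) \<le> card (g ` A)"
proof -
  have "f ` A = (\<lambda>y. f (inv_into A g y)) ` (g ` A)"
  proof (rule set_eqI, rule iffI)
    fix z assume "z \<in> f ` A"
    then obtain x where x: "x \<in> A" "z = f x" by auto
    have "g (inv_into A g (g x)) = g x" "inv_into A g (g x) \<in> A" using x(1)
      by (auto intro: f_inv_into_f inv_into_into)
    hence "f (inv_into A g (g x)) = f x" using assms(2) x(1) by blast
    thus "z \<in> (\<lambda>y. f (inv_into A g y)) ` (g ` A)" using x by force
  next
    fix z assume "z \<in> (\<lambda>y. f (inv_into A g y)) ` (g ` A)"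
    then obtain x where x: "x \<in> A" "z = f (inv_into A g (g x))" by auto
    thus "z \<in> f ` A" by (auto intro: inv_into_into)
  qed
  thus ?thesis using card_image_le assms(1) by (metis finite_imageI)
qed

lemma card_img_eq:
  assumes "finite A" "\<And>x y. x \<in> A \<Longrightarrow> y \<in> A \<Longrightarrow> f x = f y \<longleftrightarrow> g x = g y"
  shows "card (f ` A) = card (g ` A)"
  using card_img_le[of A f g] card_img_le[of A g f] assms by (meson le_antisym)

definition fo :: "nat list \<Rightarrow> nat \<Rightarrow> nat" where
  "fo u i = (LEAST k. k < length u \<and> u!k = u!i)"

lemma fo_props: assumes "i < length u"
  shows "fo u i \<le> i" "fo u i < length u" "u ! fo u i = u ! i" "\<And>k. k < fo u i \<Longrightarrow> u!k \<noteq> u!i"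
proof -
  have P: "i < length u \<and> u!i = u!i" using assms by simp
  show "fo u i \<le> i" unfolding fo_def using Least_le[of "\<lambda>k. k < length u \<and> u!k = u!i" i] P by blast
  show "fo u i < length u" "u ! fo u i = u ! i" unfolding fo_def using LeastI[of "\<lambda>k. k < length u \<and> u!k = u!i" i] P by auto
  fix k assume k: "k < fo u i"
  hence "\<not> (k < length u \<and> u!k = u!i)" unfolding fo_def by (rule not_less_Least)
  moreover have "k < length u" using k \<open>fo u i < length u\<close> by simp
  ultimately show "u!k \<noteq> u!i" by simp
qed

lemma relabel_nth: assumes "i < length u"
  shows "relabel u ! i = card ((!) u ` {..<fo u i}) + 1"
proof -
  have "takeWhile (\<lambda>y. y \<noteq> u!i) u = take (fo u i) u"
    by (rule takeWhile_eq_take_P_nth) (use fo_props[OF assms] in auto)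
  moreover have "set (take (fo u i) u) = (!) u ` {..<fo u i}"
    using nth_image[of "fo u i" u] fo_props(2)[OF assms] by (simp add: lessThan_atLeast0)
  ultimately show ?thesis unfolding relabel_def using assms by simp
qed

lemma length_relabel[simp]: "length (relabel u) = length u"
  unfolding relabel_def by simp

definition kereq :: "nat list \<Rightarrow> nat list \<Rightarrow> bool" where
  "kereq u v \<longleftrightarrow> length u = length v \<and> (\<forall>i<length u. \<forall>j<length u. u!i = u!j \<longleftrightarrow> v!i = v!j)"

lemma kereq_sym: "kereq u v \<Longrightarrow> kereq v u" unfolding kereq_def by auto
lemma kereq_trans: "kereq u v \<Longrightarrow> kereq v w \<Longrightarrow> kereq u w" unfolding kereq_def by auto

lemma kereq_relabel_eq: assumes "kereq u v" shows "relabel u = relabel v"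
proof (rule nth_equalityI)
  show "length (relabel u) = length (relabel v)" using assms unfolding kereq_def by simp
  fix i assume "i < length (relabel u)"
  hence i: "i < length u" "i < length v" using assms unfolding kereq_def by auto
  have K: "\<And>k j. k < length u \<Longrightarrow> j < length u \<Longrightarrow> u!k = u!j \<longleftrightarrow> v!k = v!j"
    using assms unfolding kereq_def by auto
  have L: "length u = length v" using assms unfolding kereq_def by simp
  have "(\<lambda>k. k < length u \<and> u!k = u!i) = (\<lambda>k. k < length v \<and> v!k = v!i)"
    using K i(1) L by auto
  hence "fo u i = fo v i" unfolding fo_def by simp
  moreover have "card ((!) u ` {..<fo u i}) = card ((!) v ` {..<fo u i})"
    by (rule card_img_eq) (use K fo_props(2)[OF i(1)] in auto)
  ultimately show "relabel u ! i = relabel v ! i" using relabel_nth i by simp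
qed

lemma relabel_strict:
  assumes ab: "a < length u" "b < length u" "u!a \<noteq> u!b" "fo u a < fo u b"
  shows "card ((!) u ` {..<fo u a}) < card ((!) u ` {..<fo u b})"
proof (rule psubset_card_mono)
  show "finite ((!) u ` {..<fo u b})" by simp
  have "u!a \<in> (!) u ` {..<fo u b}"
    by (rule image_eqI[of _ _ "fo u a"]) (use fo_props(3)[OF ab(1)] ab(4) in auto)
  moreover have "u!a \<notin> (!) u ` {..<fo u a}"
  proof
    assume "u!a \<in> (!) u ` {..<fo u a}"
    then obtain k where "k < fo u a" "u!a = u!k" by auto
    thus False using fo_props(4)[OF ab(1), of k] by simp
  qed
  moreover have "(!) u ` {..<fo u a} \<subseteq> (!) u ` {..<fo u b}" using ab(4) by auto
  ultimately show "(!) u ` {..<fo u a} \<subset> (!) u ` {..<fo u b}" by blast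
qed

lemma relabel_ker: assumes i': "i < length u" and j': "j < length u"
  shows "relabel u ! i = relabel u ! j \<longleftrightarrow> u ! i = u ! j"
proof
  assume "u!i = u!j"
  hence "fo u i = fo u j" unfolding fo_def by simp
  thus "relabel u ! i = relabel u ! j" using relabel_nth i' j' by simp
next
  assume ne: "relabel u ! i = relabel u ! j"
  show "u!i = u!j"
  proof (rule ccontr)
    assume d: "u!i \<noteq> u!j"
    have "fo u i \<noteq> fo u j" using fo_props(3)[OF i'] fo_props(3)[OF j'] d by metis
    hence "fo u i < fo u j \<or> fo u j < fo u i" by arith
    thus False using relabel_strict[OF i' j' d] relabel_strict[OF j' i' d[symmetric]] ne
      relabel_nth[OF i'] relabel_nth[OF j'] by auto
  qed
qed

lemma kereq_relabel: "kereq (relabel u) u"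
  unfolding kereq_def using relabel_ker by simp

lemma relabel_idem: "relabel (relabel u) = relabel u"
  using kereq_relabel_eq[OF kereq_relabel] .


definition MM :: "nat \<Rightarrow> (nat \<Rightarrow> nat) \<Rightarrow> nat set" where
  "MM n p = {j \<in> {1..n}. cyc_min p j = j}"

definition DD :: "nat \<Rightarrow> (nat \<Rightarrow> nat) \<Rightarrow> nat \<Rightarrow> nat" where
  "DD n p m = card {j \<in> MM n p. j \<le> m}"

lemma cs_nth: "k < n \<Longrightarrow> cycle_structure n p ! k = DD n p (cyc_min p (k+1))"
  unfolding cycle_structure_def DD_def MM_def by (subst nth_map) (auto simp del: upt_Suc)

lemma length_cs[simp]: "length (cycle_structure n p) = n"
  unfolding cycle_structure_def by simp

lemma DD_strict: assumes "a \<in> MM n p" "b \<in> MM n p" "a < b" shows "DD n p a < DD n p b"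
  unfolding DD_def
proof (rule psubset_card_mono)
  show "finite {j \<in> MM n p. j \<le> b}" unfolding MM_def by simp
  have "b \<in> {j \<in> MM n p. j \<le> b}" "b \<notin> {j \<in> MM n p. j \<le> a}" using assms by auto
  moreover have "{j \<in> MM n p. j \<le> a} \<subseteq> {j \<in> MM n p. j \<le> b}" using assms by auto
  ultimately show "{j \<in> MM n p. j \<le> a} \<subset> {j \<in> MM n p. j \<le> b}" by blast
qed

lemma DD_inj: "inj_on (DD n p) (MM n p)"
  unfolding inj_on_def by (metis DD_strict less_irrefl nat_neq_iff)

lemma cmin_MM: assumes "p permutes {1..n}" "i \<in> {1..n}" shows "cyc_min p i \<in> MM n p"
  unfolding MM_def using cmin_idem[OF assms] cmin_range[OF assms] by auto

lemma cs_ker: assumes "p permutes {1..n}" "i \<in> {1..n}" "j \<in> {1..n}"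
  shows "DD n p (cyc_min p i) = DD n p (cyc_min p j) \<longleftrightarrow> j \<in> cycle_of p i"
  using inj_on_eq_iff[OF DD_inj cmin_MM[OF assms(1,2)] cmin_MM[OF assms(1,3)]] cmin_iff[OF assms] by simp

lemma cs_alloc: assumes p: "p permutes {1..n}" shows "relabel (cycle_structure n p) = cycle_structure n p"
proof (rule nth_equalityI)
  show "length (relabel (cycle_structure n p)) = length (cycle_structure n p)" by simp
  fix k assume "k < length (relabel (cycle_structure n p))"
  hence k: "k < n" by simp
  define cs where "cs = cycle_structure n p"
  have csn: "\<And>y. y < n \<Longrightarrow> cs ! y = DD n p (cyc_min p (y+1))" using cs_nth cs_def by blast
  have csl: "length cs = n" using cs_def by simp
  define m where "m = cyc_min p (k+1)"
  have k1: "k+1 \<in> {1..n}" using k by simp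
  have mM: "m \<in> MM n p" using cmin_MM[OF p k1] unfolding m_def .
  hence m1: "m \<in> {1..n}" "cyc_min p m = m" unfolding MM_def by auto
  have csk: "cs ! k = DD n p m" using csn[OF k] unfolding m_def .
  have fo: "fo cs k = m - 1" unfolding fo_def
  proof (rule Least_equality)
    have "m - 1 < n" "m - 1 + 1 = m" using m1 by auto
    hence "cs ! (m - 1) = DD n p m" using csn[of "m-1"] m1(2) by simp
    thus "m - 1 < length cs \<and> cs ! (m - 1) = cs ! k"
      using csk csl \<open>m - 1 < n\<close> by simp
    fix y assume y: "y < length cs \<and> cs ! y = cs ! k"
    hence y1: "y + 1 \<in> {1..n}" "y < n" using csl by auto
    have "DD n p (cyc_min p (k+1)) = DD n p (cyc_min p (y+1))" using y csn[OF y1(2)] csk unfolding m_def by simp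
    hence "y+1 \<in> cycle_of p (k+1)" using cs_ker[OF p k1 y1(1)] by simp
    hence "m \<le> y + 1" using cmin_le[OF p k1] unfolding m_def by simp
    thus "m - 1 \<le> y" by simp
  qed
  have img: "(!) cs ` {..<m-1} = DD n p ` {j \<in> MM n p. j < m}"
  proof (rule set_eqI, rule iffI)
    fix z assume "z \<in> (!) cs ` {..<m-1}"
    then obtain y where y: "y < m - 1" "z = cs ! y" by auto
    have yn: "y < n" "y+1 \<in> {1..n}" using y m1 by auto
    have "cyc_min p (y+1) \<le> y+1" using cmin_le[OF p yn(2) cyc_self] .
    moreover have "cyc_min p (y+1) \<in> MM n p" using cmin_MM[OF p yn(2)] .
    ultimately have "cyc_min p (y+1) \<in> {j \<in> MM n p. j < m}" using y by auto
    moreover have "z = DD n p (cyc_min p (y+1))" using y(2) csn[OF yn(1)] by simp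
    ultimately show "z \<in> DD n p ` {j \<in> MM n p. j < m}" by blast
  next
    fix z assume "z \<in> DD n p ` {j \<in> MM n p. j < m}"
    then obtain j where j: "j \<in> MM n p" "j < m" "z = DD n p j" by auto
    hence "j \<in> {1..n}" "cyc_min p j = j" unfolding MM_def by auto
    hence "j - 1 < n" "j - 1 + 1 = j" by auto
    hence "cs ! (j - 1) = z" using csn[of "j-1"] j \<open>cyc_min p j = j\<close> by simp
    moreover have "j - 1 < m - 1" using j \<open>j \<in> {1..n}\<close> by auto
    ultimately show "z \<in> (!) cs ` {..<m-1}" by force
  qed
  have "card ((!) cs ` {..<m-1}) = card {j \<in> MM n p. j < m}"
    unfolding img by (rule card_image) (rule inj_on_subset[OF DD_inj], auto)
  moreover have "{j \<in> MM n p. j \<le> m} = insert m {j \<in> MM n p. j < m}" using mM by auto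
  moreover have "finite {j \<in> MM n p. j < m}" unfolding MM_def by simp
  ultimately have "card ((!) cs ` {..<m-1}) + 1 = DD n p m" unfolding DD_def by simp
  thus "relabel (cycle_structure n p) ! k = cycle_structure n p ! k"
    using relabel_nth[of k cs] k fo csk csl unfolding cs_def[symmetric] by simp
qed


definition conj :: "(nat \<Rightarrow> nat) \<Rightarrow> (nat \<Rightarrow> nat) \<Rightarrow> (nat \<Rightarrow> nat)" where
  "conj s p = inv s \<circ> p \<circ> s"

lemma conj_permutes: "s permutes S \<Longrightarrow> p permutes S \<Longrightarrow> conj s p permutes S"
  unfolding conj_def by (intro permutes_compose permutes_inv) auto

lemma conj_funpow: assumes "s permutes S" shows "(conj s p) ^^ k = inv s \<circ> (p ^^ k) \<circ> s"
proof (induct k)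
  case 0 show ?case using permutes_inv_o(2)[OF assms] by simp
next
  case (Suc k)
  have "conj s p ^^ Suc k = (inv s \<circ> p \<circ> s) \<circ> (inv s \<circ> (p ^^ k) \<circ> s)"
  proof -
    have "conj s p ^^ Suc k = conj s p \<circ> (conj s p ^^ k)" by simp
    thus ?thesis unfolding Suc by (simp add: conj_def)
  qed
  also have "\<dots> = inv s \<circ> p \<circ> (s \<circ> inv s) \<circ> (p ^^ k) \<circ> s" by (simp add: o_assoc)
  also have "\<dots> = inv s \<circ> (p ^^ Suc k) \<circ> s" using permutes_inv_o(1)[OF assms] by (simp add: o_assoc)
  finally show ?case .
qed

lemma conj_cycle_iff: assumes "s permutes S"
  shows "j \<in> cycle_of (conj s p) i \<longleftrightarrow> s j \<in> cycle_of p (s i)"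
proof -
  have "\<And>k. (conj s p ^^ k) i = j \<longleftrightarrow> (p ^^ k) (s i) = s j"
  proof -
    fix k
    have "(conj s p ^^ k) i = inv s ((p ^^ k) (s i))" using conj_funpow[OF assms] by simp
    thus "(conj s p ^^ k) i = j \<longleftrightarrow> (p ^^ k) (s i) = s j" using permutes_inv_eq[OF assms] by auto
  qed
  hence "(\<exists>k. j = (conj s p ^^ k) i) \<longleftrightarrow> (\<exists>k. s j = (p ^^ k) (s i))" by (metis)
  thus ?thesis unfolding cycle_of_def by simp
qed

lemma conj_cycle: assumes "s permutes S"
  shows "cycle_of (conj s p) i = inv s ` cycle_of p (s i)"
proof (rule set_eqI)
  fix x
  have "x = inv s (s x)" using permutes_inverses(2)[OF assms] by simp
  moreover have "\<And>y. inv s y = x \<longleftrightarrow> y = s x" using permutes_inv_eq[OF assms] by auto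
  ultimately show "x \<in> cycle_of (conj s p) i \<longleftrightarrow> x \<in> inv s ` cycle_of p (s i)"
    using conj_cycle_iff[OF assms] permutes_inverses(1)[OF assms] by auto
qed

lemma conj_cycle_type: assumes "s permutes {1..n}"
  shows "cycle_type n (conj s p) = cycle_type n p"
proof -
  have inj: "inj (inv s)" using permutes_inj[OF permutes_inv[OF assms]] .
  have img: "cycle_of (conj s p) ` {1..n} = image (inv s) ` (cycle_of p ` {1..n})"
  proof -
    have "cycle_of (conj s p) ` {1..n} = image (inv s) ` (cycle_of p ` (s ` {1..n}))"
      using conj_cycle[OF assms] by (auto simp: image_comp)
    thus ?thesis using permutes_image[OF assms] by simp
  qed
  have eq: "{c \<in> image (inv s) ` X. card c = l} = image (inv s) ` {c \<in> X. card c = l}" for X l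
  proof -
    have "card (inv s ` c) = card c" for c using card_image[OF inj_on_subset[OF inj subset_UNIV]] .
    thus ?thesis by auto
  qed
  have ii: "inj (image (inv s))" unfolding inj_def using inj_image_eq_iff[OF inj] by blast
  have "card {c \<in> cycle_of (conj s p) ` {1..n}. card c = l} = card {c \<in> cycle_of p ` {1..n}. card c = l}" for l
    unfolding img eq by (rule card_image[OF inj_on_subset[OF ii subset_UNIV]])
  thus ?thesis unfolding cycle_type_def by simp
qed

lemma pv_nth: "k < n \<Longrightarrow> permute_vec n s w ! k = w ! (s (k+1) - 1)"
  unfolding permute_vec_def by (subst nth_map) (auto simp del: upt_Suc)

lemma pv_len[simp]: "length (permute_vec n s w) = n"
  unfolding permute_vec_def by simp

lemma s_range: fixes s :: "nat \<Rightarrow> nat" assumes "s permutes {1..n}" "k < n" shows "s (k+1) - 1 < n" "s (k+1) - 1 + 1 = s (k+1)" "s (k+1) \<in> {1..n}"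
proof -
  have "s (k+1) \<in> {1..n}" using permutes_in_image[OF assms(1)] assms(2) by simp
  thus "s (k+1) - 1 < n" "s (k+1) - 1 + 1 = s (k+1)" "s (k+1) \<in> {1..n}" by auto
qed

lemma kereq_pv_back: assumes "s permutes {1..n}" "length u = n" "length v = n"
  "kereq (permute_vec n s u) (permute_vec n s v)" shows "kereq u v"
  unfolding kereq_def
proof (intro conjI allI impI)
  show "length u = length v" using assms by simp
  have K: "\<And>a b. a < n \<Longrightarrow> b < n \<Longrightarrow> u ! (s (a+1) - 1) = u ! (s (b+1) - 1) \<longleftrightarrow> v ! (s (a+1) - 1) = v ! (s (b+1) - 1)"
    using assms(4) unfolding kereq_def by (simp add: pv_nth)
  have bk: "\<exists>a<n. s (a+1) - 1 = i" if "i < n" for i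
  proof -
    have "inv s (i+1) \<in> {1..n}" using permutes_in_image[OF permutes_inv[OF assms(1)]] that by simp
    moreover have "s (inv s (i+1)) = i + 1" using permutes_inverses(1)[OF assms(1)] by simp
    ultimately show ?thesis by (intro exI[of _ "inv s (i+1) - 1"]) auto
  qed
  fix i j assume "i < length u" "j < length u"
  then obtain a b where "a < n" "b < n" "s (a+1) - 1 = i" "s (b+1) - 1 = j" using bk assms(2) by metis
  thus "u ! i = u ! j \<longleftrightarrow> v ! i = v ! j" using K by blast
qed

lemma cs_conj: assumes s: "s permutes {1..n}" and p: "p permutes {1..n}"
  shows "cycle_structure n (conj s p) = relabel (permute_vec n s (cycle_structure n p))"
proof -
  have q: "conj s p permutes {1..n}" using conj_permutes[OF s p] .
  have "kereq (cycle_structure n (conj s p)) (permute_vec n s (cycle_structure n p))"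
    unfolding kereq_def
  proof (intro conjI allI impI)
    show "length (cycle_structure n (conj s p)) = length (permute_vec n s (cycle_structure n p))" by simp
    fix a b assume "a < length (cycle_structure n (conj s p))" "b < length (cycle_structure n (conj s p))"
    hence ab: "a < n" "b < n" by auto
    have a1: "a+1 \<in> {1..n}" and b1: "b+1 \<in> {1..n}" using ab by auto
    have "cycle_structure n (conj s p) ! a = cycle_structure n (conj s p) ! b \<longleftrightarrow> b+1 \<in> cycle_of (conj s p) (a+1)"
      using cs_nth[OF ab(1)] cs_nth[OF ab(2)] cs_ker[OF q a1 b1] by simp
    also have "\<dots> \<longleftrightarrow> s (b+1) \<in> cycle_of p (s (a+1))" using conj_cycle_iff[OF s] .
    also have "\<dots> \<longleftrightarrow> cycle_structure n p ! (s (a+1) - 1) = cycle_structure n p ! (s (b+1) - 1)"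
      using cs_nth[OF s_range(1)[OF s ab(1)]] cs_nth[OF s_range(1)[OF s ab(2)]] s_range(2)[OF s ab(1)] s_range(2)[OF s ab(2)]
        cs_ker[OF p s_range(3)[OF s ab(1)] s_range(3)[OF s ab(2)]] by simp
    also have "\<dots> \<longleftrightarrow> permute_vec n s (cycle_structure n p) ! a = permute_vec n s (cycle_structure n p) ! b"
      using pv_nth[OF ab(1)] pv_nth[OF ab(2)] by simp
    finally show "cycle_structure n (conj s p) ! a = cycle_structure n (conj s p) ! b \<longleftrightarrow> permute_vec n s (cycle_structure n p) ! a = permute_vec n s (cycle_structure n p) ! b" .
  qed
  hence "relabel (cycle_structure n (conj s p)) = relabel (permute_vec n s (cycle_structure n p))"
    by (rule kereq_relabel_eq)
  thus ?thesis using cs_alloc[OF q] by simp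
qed


lemma conj_inverse: assumes "s permutes S" shows "conj s (s \<circ> q \<circ> inv s) = q"
proof
  fix x show "conj s (s \<circ> q \<circ> inv s) x = q x"
    unfolding conj_def using permutes_inverses[OF assms] by simp
qed

lemma conj_inj: assumes "s permutes S" "conj s p = conj s q" shows "p = q"
proof
  fix y
  have "p y = s (conj s p (inv s y))" for p unfolding conj_def using permutes_inverses[OF assms(1)] by simp
  from this[of p] this[of q] assms(2) show "p y = q y" by metis
qed

lemma sum_eq_main:
  fixes n :: nat and P :: "(nat \<Rightarrow> nat) pmf" and s :: "nat \<Rightarrow> nat"
  assumes ex: "fin_exch_perm n P" and s: "s permutes {1..n}" and w: "alloc_vector n w"
  shows "sum (pmf P) {p. p permutes {1..n} \<and> cycle_structure n p = w}
       = sum (pmf P) {p. p permutes {1..n} \<and> cycle_structure n p = relabel (permute_vec n s w)}"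
proof -
  have wl: "length w = n" and wr: "relabel w = w" using w unfolding alloc_vector_def by auto
  have bij: "bij_betw (conj s) {p. p permutes {1..n} \<and> cycle_structure n p = w}
       {p. p permutes {1..n} \<and> cycle_structure n p = relabel (permute_vec n s w)}"
    unfolding bij_betw_def
  proof (intro conjI)
    show "inj_on (conj s) {p. p permutes {1..n} \<and> cycle_structure n p = w}"
      unfolding inj_on_def using conj_inj[OF s] by blast
    show "conj s ` {p. p permutes {1..n} \<and> cycle_structure n p = w} =
       {p. p permutes {1..n} \<and> cycle_structure n p = relabel (permute_vec n s w)}"
    proof (rule set_eqI, rule iffI)
      fix q assume "q \<in> conj s ` {p. p permutes {1..n} \<and> cycle_structure n p = w}"
      then obtain p where p: "p permutes {1..n}" "cycle_structure n p = w" "q = conj s p" by auto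
      thus "q \<in> {p. p permutes {1..n} \<and> cycle_structure n p = relabel (permute_vec n s w)}"
        using cs_conj[OF s p(1)] conj_permutes[OF s p(1)] by simp
    next
      fix q assume "q \<in> {p. p permutes {1..n} \<and> cycle_structure n p = relabel (permute_vec n s w)}"
      hence q: "q permutes {1..n}" "cycle_structure n q = relabel (permute_vec n s w)" by auto
      define p where "p = s \<circ> q \<circ> inv s"
      have pp: "p permutes {1..n}" unfolding p_def
        by (intro permutes_compose permutes_inv s q(1))
      have qp: "q = conj s p" unfolding p_def using conj_inverse[OF s] by simp
      have "relabel (permute_vec n s (cycle_structure n p)) = relabel (permute_vec n s w)"
        using cs_conj[OF s pp] q(2) qp by simp
      hence "kereq (permute_vec n s (cycle_structure n p)) (permute_vec n s w)"
        using kereq_relabel[of "permute_vec n s (cycle_structure n p)"] kereq_relabel[of "permute_vec n s w"]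
        by (metis kereq_sym kereq_trans)
      hence "kereq (cycle_structure n p) w" by (rule kereq_pv_back[OF s length_cs wl])
      hence "relabel (cycle_structure n p) = relabel w" by (rule kereq_relabel_eq)
      hence "cycle_structure n p = w" using cs_alloc[OF pp] wr by simp
      thus "q \<in> conj s ` {p. p permutes {1..n} \<and> cycle_structure n p = w}" using qp pp by blast
    qed
  qed
  have "sum (\<lambda>p. pmf P (conj s p)) {p. p permutes {1..n} \<and> cycle_structure n p = w}
      = sum (pmf P) {p. p permutes {1..n} \<and> cycle_structure n p = relabel (permute_vec n s w)}"
    by (rule sum.reindex_bij_betw[OF bij])
  moreover have "pmf P (conj s p) = pmf P p" if "p permutes {1..n}" for p
    using ex conj_permutes[OF s that] that conj_cycle_type[OF s, of p] unfolding fin_exch_perm_def by blast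
  ultimately show ?thesis by simp
qed

lemma pmf_as_sum:
  fixes n :: nat and P :: "(nat \<Rightarrow> nat) pmf"
  assumes "\<forall>\<pi> \<in> set_pmf P. \<pi> permutes {1..n}"
  shows "pmf (map_pmf (cycle_structure n) P) w = sum (pmf P) {p. p permutes {1..n} \<and> cycle_structure n p = w}"
proof -
  have fin: "finite {p. p permutes {1..n} \<and> cycle_structure n p = w}"
    by (rule finite_subset[OF _ finite_permutations[of "{1..n}"]]) auto
  have "cycle_structure n -` {w} \<inter> set_pmf P = {p. p permutes {1..n} \<and> cycle_structure n p = w} \<inter> set_pmf P"
    using assms by auto
  hence "measure P (cycle_structure n -` {w}) = measure P {p. p permutes {1..n} \<and> cycle_structure n p = w}"
    by (metis measure_Int_set_pmf)
  thus ?thesis unfolding pmf_map using measure_measure_pmf_finite[OF fin] by simp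
qed

theorem proposition1:
  fixes n :: nat and P :: "(nat \<Rightarrow> nat) pmf"
  assumes "n \<ge> 1"
    and "\<forall>\<pi> \<in> set_pmf P. \<pi> permutes {1..n}"
    and "fin_exch_perm n P"
  shows "fin_exch_partition n (map_pmf (cycle_structure n) P)"
  unfolding fin_exch_partition_def
  using pmf_as_sum[OF assms(2)] sum_eq_main[OF assms(3)] by simp

end
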